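(* Consider the seven lines of a Fano plane, each carrying an orientation, and fix a reference orientation for each line. Let $P$ be the set of lines whose orientation agrees with the reference and $R$ the set of lines whose orientation is reversed, with $N(P)+N(R)=7$. For a line $l_1$, the operation $\mathrm{PL}(l_1)$ reverses the orientation of each of the six lines other than $l_1$ and leaves the orientation of $l_1$ unchanged. After performing $\mathrm{PL}(l_1)$: if $l_1\in P$ then the new count is $N(R)=N(P)-1$ (with $N(P)$ the count before the operation), and if $l_1\in R$ then the new count is $N(R)=N(P)+1$. Consequently, starting from a presentation with $N(R)=0$ (standard Type I box-kite), $N(R)=2$ (standard Type II box-kite), $N(R)=6$ (explosion of a Type I), or $N(R)\in\{4,6\}$ (explosion of a Type II), any subsequent operation $\mathrm{PL}(l_2)$ yields a presentation with $N(R)$ even.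
   Context: Here the Fano plane presentation is that of a box-kite: seven nodes (six L-indices $a,\dots,f$ and the strut constant $S$ in the center) and seven lines (the trips), each oriented by its cyclic positive order of multiplication of the corresponding Cayley–Dickson basis units. The reference orientation is that of a standard Type I box-kite. $\mathrm{PL}(l)$ is the operation of adding a new high power of two $g$ to the four nodes not on the line $l$ (which, by Rule 2 of the Cayley–Dickson sign conventions, reverses exactly the six lines other than $l$). *)

theory Defs
  imports Main
begin

definition fano_lines :: "nat set set" where
  "fano_lines = {{0,1,3},{1,2,4},{2,3,5},{3,4,6},{4,5,0},{5,6,1},{6,0,2}}"

text \<open>An orientation assignment: for each line, True iff its orientation agrees with the
  fixed reference orientation, False iff it is reversed.\<close>
type_synonym orientation = "nat set \<Rightarrow> bool"

definition P_lines :: "orientation \<Rightarrow> nat set set" where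
  "P_lines \<sigma> = {l \<in> fano_lines. \<sigma> l}"

definition R_lines :: "orientation \<Rightarrow> nat set set" where
  "R_lines \<sigma> = {l \<in> fano_lines. \<not> \<sigma> l}"

definition N :: "nat set set \<Rightarrow> nat" where
  "N A = card A"

definition PL :: "nat set \<Rightarrow> orientation \<Rightarrow> orientation" where
  "PL l \<sigma> = (\<lambda>m. if m = l then \<sigma> m else \<not> \<sigma> m)"

end

theory Submission
  imports Defs
begin

lemma card_F: "card fano_lines = 7"
proof -
  have fin: "finite fano_lines" unfolding fano_lines_def by simp
  have "(\<lambda>A. \<Sum>A) ` fano_lines = {4::nat,7,10,13,9,12,8}"
    unfolding fano_lines_def by simp
  then have "card ((\<lambda>A. \<Sum>A) ` fano_lines) = 7" by simp
  then have a: "7 \<le> card fano_lines" using card_image_le[OF fin] by metis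
  have "card fano_lines \<le> 7" unfolding fano_lines_def
    using card_length[of "[{0::nat,1,3},{1,2,4},{2,3,5},{3,4,6},{4,5,0},{5,6,1},{6,0,2}]"]
    by simp
  with a show ?thesis by simp
qed

lemma fin_F: "finite fano_lines" unfolding fano_lines_def by simp

lemma sum7: "N (P_lines \<sigma>) + N (R_lines \<sigma>) = 7"
proof -
  have "P_lines \<sigma> \<union> R_lines \<sigma> = fano_lines" "P_lines \<sigma> \<inter> R_lines \<sigma> = {}"
    unfolding P_lines_def R_lines_def by auto
  moreover have "finite (P_lines \<sigma>)" "finite (R_lines \<sigma>)"
    unfolding P_lines_def R_lines_def using fin_F by auto
  ultimately show ?thesis unfolding N_def using card_F card_Un_disjoint by metis
qed

lemma RPL: "l \<in> fano_lines \<Longrightarrow> R_lines (PL l \<sigma>) = (if \<sigma> l then P_lines \<sigma> - {l} else insert l (P_lines \<sigma>))"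
  unfolding R_lines_def P_lines_def PL_def by auto

lemma finP: "finite (P_lines \<sigma>)" unfolding P_lines_def using fin_F by auto

theorem lemma3:
  shows "(\<forall>\<sigma>. N (P_lines \<sigma>) + N (R_lines \<sigma>) = 7)
    \<and> (\<forall>\<sigma> l1. l1 \<in> fano_lines \<longrightarrow>
         (l1 \<in> P_lines \<sigma> \<longrightarrow> N (R_lines (PL l1 \<sigma>)) = N (P_lines \<sigma>) - 1)
       \<and> (l1 \<in> R_lines \<sigma> \<longrightarrow> N (R_lines (PL l1 \<sigma>)) = N (P_lines \<sigma>) + 1))
    \<and> (\<forall>\<sigma> l2. l2 \<in> fano_lines \<longrightarrow> N (R_lines \<sigma>) \<in> {0, 2, 4, 6} \<longrightarrow>
         even (N (R_lines (PL l2 \<sigma>))))"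
proof (intro conjI allI impI)
  fix \<sigma> show "N (P_lines \<sigma>) + N (R_lines \<sigma>) = 7" by (rule sum7)
next
  fix \<sigma> l1 assume "l1 \<in> fano_lines" "l1 \<in> P_lines \<sigma>"
  then show "N (R_lines (PL l1 \<sigma>)) = N (P_lines \<sigma>) - 1"
    using RPL[of l1 \<sigma>] finP[of \<sigma>] unfolding N_def by (simp add: P_lines_def)
next
  fix \<sigma> l1 assume "l1 \<in> fano_lines" "l1 \<in> R_lines \<sigma>"
  then show "N (R_lines (PL l1 \<sigma>)) = N (P_lines \<sigma>) + 1"
    using RPL[of l1 \<sigma>] finP[of \<sigma>] unfolding N_def
    by (simp add: P_lines_def R_lines_def)
next
  fix \<sigma> l2 assume l2: "l2 \<in> fano_lines" and e: "N (R_lines \<sigma>) \<in> {0, 2, 4, 6}"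
  have odd: "odd (N (P_lines \<sigma>))" using sum7[of \<sigma>] e by auto
  show "even (N (R_lines (PL l2 \<sigma>)))"
  proof (cases "\<sigma> l2")
    case True
    then have "l2 \<in> P_lines \<sigma>" using l2 by (simp add: P_lines_def)
    then have "N (R_lines (PL l2 \<sigma>)) = N (P_lines \<sigma>) - 1"
      using RPL[of l2 \<sigma>] finP[of \<sigma>] True l2 unfolding N_def by simp
    then show ?thesis using odd by simp
  next
    case False
    then have "l2 \<notin> P_lines \<sigma>" by (simp add: P_lines_def)
    then have "N (R_lines (PL l2 \<sigma>)) = N (P_lines \<sigma>) + 1"
      using RPL[of l2 \<sigma>] finP[of \<sigma>] False l2 unfolding N_def by simp
    then show ?thesis using odd by simp
  qed
qed

end
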